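(* Let $\lambda_1,\lambda_2\in\mathbb{C}\setminus\{0,-1,-2,\dots\}$, set $\gamma=\lambda_1+\lambda_2-1$, and let $\alpha,\beta\in\mathbb{C}$ with $\alpha+\beta\notin\mathbb{Z}$, $\alpha\notin\{-1,-2,\dots\}$ and $\beta+\gamma\notin\{-1,-2,\dots\}$. On $W=V_{\lambda_1}\otimes V_{\lambda_2}$ put $H^{(1)}=H\otimes\mathbb{I}$, $H^{(2)}=\mathbb{I}\otimes H$, $D=H^{(1)}-H^{(2)}-\lambda_1+\lambda_2+2\alpha+2\beta+2$ (an invertible diagonal operator), and define $$\Delta(H)=H^{(1)}+H^{(2)},$$ $$\Delta(E)=D^{-1}\Big((H^{(1)}-\lambda_1+2\alpha+2\beta+2)(E\otimes\mathbb{I})+(\lambda_2-H^{(2)}+2\alpha+2\beta+2)(\mathbb{I}\otimes E)\Big),$$ $$\Delta(F)=D^{-1}\Big((H^{(1)}-\lambda_1+2\alpha+2)(H^{(1)}-\lambda_1+2\beta+2\gamma+2)(H^{(1)}+\lambda_1)^{-1}(F\otimes\mathbb{I})$$ $$\qquad\qquad+(\lambda_2-H^{(2)}+2\beta)(H^{(2)}-\lambda_2-2\alpha+2\gamma)(H^{(2)}+\lambda_2)^{-1}(\mathbb{I}\otimes F)\Big).$$ Then (a) these operators satisfy $[\Delta(H),\Delta(E)]=2\Delta(E)$, $[\Delta(H),\Delta(F)]=-2\Delta(F)$, $[\Delta(E),\Delta(F)]=\Delta(H)$, i.e. they give a representation of $sl_2$ on $W$; and (b) for all integers $0\le k\le N$,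 the vectors $w_{k,N}=\sum_{n=0}^N R_n(k,N)\,|\lambda_1,n\rangle\otimes|\lambda_2,N-n\rangle$ satisfy $\Delta(H)w_{k,N}=(\lambda_1+\lambda_2+2N)w_{k,N}$, $\Delta(E)w_{k,N}=w_{k,N+1}$ and $\Delta(F)w_{k,N}=-(N-k)(N+k+\gamma)\,w_{k,N-1}$ (with $w_{k,k-1}=0$); i.e. the $R_n(k,N)$ are Clebsch–Gordan coefficients for this generalized coproduct of $sl_2$.
   Context: $sl_2$ is generated by $H,E,F$ with $[H,E]=2E$, $[H,F]=-2F$, $[E,F]=H$. For $\lambda\in\mathbb{C}$, $V_\lambda$ has basis $\{|\lambda,n\rangle:n\ge0\}$ with $H|\lambda,n\rangle=(\lambda+2n)|\lambda,n\rangle$, $E|\lambda,n\rangle=|\lambda,n+1\rangle$, $F|\lambda,n\rangle=-n(n+\lambda-1)|\lambda,n-1\rangle$. The functions $R_n(k,N)$ (proportional to Racah polynomials) are $$R_n(k,N)=\binom{N}{n}\,{}_4F_3\!\left(\begin{matrix}-n,\ n+\alpha+\beta-N+1,\ -k,\ k+\gamma\\ \alpha+1,\ \beta+\gamma+1,\ -N\end{matrix}\;\Big|\;1\right)=\binom{N}{n}\sum_{j=0}^{\min(n,k)}\frac{(-n)_j(n+\alpha+\beta-N+1)_j(-k)_j(k+\gamma)_j}{j!(\alpha+1)_j(\beta+\gamma+1)_j(-N)_j},$$ with $(a)_j=a(a+1)\cdots(a+j-1)$. Operator products mean composition. *)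

theory Defs
  imports Complex_Main
begin

text \<open>A vector of W = V_l1 (x) V_l2 is represented by its coefficient function:
  v m n is the coefficient of |l1,m> (x) |l2,n>. Elements of W are the finitely
  supported ones.\<close>

type_synonym tvec = "nat \<Rightarrow> nat \<Rightarrow> complex"

definition in_W :: "tvec \<Rightarrow> bool" where
  "in_W v \<longleftrightarrow> finite {(m, n). v m n \<noteq> 0}"

definition vzero :: tvec where "vzero = (\<lambda>m n. 0)"
definition vadd :: "tvec \<Rightarrow> tvec \<Rightarrow> tvec" where "vadd u v = (\<lambda>m n. u m n + v m n)"
definition vsub :: "tvec \<Rightarrow> tvec \<Rightarrow> tvec" where "vsub u v = (\<lambda>m n. u m n - v m n)"
definition vscale :: "complex \<Rightarrow> tvec \<Rightarrow> tvec" where "vscale c v = (\<lambda>m n. c * v m n)"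

definition diag :: "(nat \<Rightarrow> nat \<Rightarrow> complex) \<Rightarrow> tvec \<Rightarrow> tvec" where
  "diag d v = (\<lambda>m n. d m n * v m n)"

text \<open>Eigenvalues of H (x) I and I (x) H.\<close>
definition h1 :: "complex \<Rightarrow> nat \<Rightarrow> nat \<Rightarrow> complex" where "h1 l1 m n = l1 + 2 * of_nat m"
definition h2 :: "complex \<Rightarrow> nat \<Rightarrow> nat \<Rightarrow> complex" where "h2 l2 m n = l2 + 2 * of_nat n"

text \<open>E|l,n> = |l,n+1>,  F|l,n> = -n(n+l-1)|l,n-1>, acting on one tensor factor.\<close>
definition E1 :: "tvec \<Rightarrow> tvec" where
  "E1 v = (\<lambda>m n. if m = 0 then 0 else v (m - 1) n)"
definition E2 :: "tvec \<Rightarrow> tvec" where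
  "E2 v = (\<lambda>m n. if n = 0 then 0 else v m (n - 1))"
definition F1 :: "complex \<Rightarrow> tvec \<Rightarrow> tvec" where
  "F1 l1 v = (\<lambda>m n. - (of_nat (m + 1) * (of_nat (m + 1) + l1 - 1)) * v (m + 1) n)"
definition F2 :: "complex \<Rightarrow> tvec \<Rightarrow> tvec" where
  "F2 l2 v = (\<lambda>m n. - (of_nat (n + 1) * (of_nat (n + 1) + l2 - 1)) * v m (n + 1))"

definition Dval :: "complex \<Rightarrow> complex \<Rightarrow> complex \<Rightarrow> complex \<Rightarrow> nat \<Rightarrow> nat \<Rightarrow> complex" where
  "Dval l1 l2 a b m n = h1 l1 m n - h2 l2 m n - l1 + l2 + 2*a + 2*b + 2"

definition DeltaH :: "complex \<Rightarrow> complex \<Rightarrow> tvec \<Rightarrow> tvec" where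
  "DeltaH l1 l2 = diag (\<lambda>m n. h1 l1 m n + h2 l2 m n)"

definition DeltaE :: "complex \<Rightarrow> complex \<Rightarrow> complex \<Rightarrow> complex \<Rightarrow> tvec \<Rightarrow> tvec" where
  "DeltaE l1 l2 a b v =
     diag (\<lambda>m n. inverse (Dval l1 l2 a b m n))
       (vadd (diag (\<lambda>m n. h1 l1 m n - l1 + 2*a + 2*b + 2) (E1 v))
             (diag (\<lambda>m n. l2 - h2 l2 m n + 2*a + 2*b + 2) (E2 v)))"

definition DeltaF :: "complex \<Rightarrow> complex \<Rightarrow> complex \<Rightarrow> complex \<Rightarrow> tvec \<Rightarrow> tvec" where
  "DeltaF l1 l2 a b v =
     (let g = l1 + l2 - 1 in
     diag (\<lambda>m n. inverse (Dval l1 l2 a b m n))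
       (vadd (diag (\<lambda>m n. (h1 l1 m n - l1 + 2*a + 2) * (h1 l1 m n - l1 + 2*b + 2*g + 2)
                            * inverse (h1 l1 m n + l1)) (F1 l1 v))
             (diag (\<lambda>m n. (l2 - h2 l2 m n + 2*b) * (h2 l2 m n - l2 - 2*a + 2*g)
                            * inverse (h2 l2 m n + l2)) (F2 l2 v))))"

definition commutator :: "(tvec \<Rightarrow> tvec) \<Rightarrow> (tvec \<Rightarrow> tvec) \<Rightarrow> tvec \<Rightarrow> tvec" where
  "commutator A B v = vsub (A (B v)) (B (A v))"

text \<open>R_n(k,N) = binom(N,n) 4F3(-n, n+a+b-N+1, -k, k+g; a+1, b+g+1, -N; 1).\<close>
definition Rcoef :: "complex \<Rightarrow> complex \<Rightarrow> complex \<Rightarrow> nat \<Rightarrow> nat \<Rightarrow> nat \<Rightarrow> complex" where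
  "Rcoef a b g n k N = of_nat (N choose n) *
     (\<Sum>j = 0..min n k.
        pochhammer (- of_nat n) j * pochhammer (of_nat n + a + b - of_nat N + 1) j
        * pochhammer (- of_nat k) j * pochhammer (of_nat k + g) j
        / (fact j * pochhammer (a + 1) j * pochhammer (b + g + 1) j * pochhammer (- of_nat N) j))"

definition wvec :: "complex \<Rightarrow> complex \<Rightarrow> complex \<Rightarrow> nat \<Rightarrow> nat \<Rightarrow> tvec" where
  "wvec a b g k N = (\<lambda>m n. if m + n = N then Rcoef a b g m k N else 0)"

end

theory Submission
  imports Defs
begin

definition Dv :: "complex \<Rightarrow> complex \<Rightarrow> nat \<Rightarrow> nat \<Rightarrow> complex" where
  "Dv a b m n = 2 * of_nat m - 2 * of_nat n + 2 * (a + b) + 2"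
definition Ac :: "complex \<Rightarrow> complex \<Rightarrow> nat \<Rightarrow> complex" where
  "Ac a b m = 2 * of_nat m + 2 * (a + b) + 2"
definition Bc :: "complex \<Rightarrow> complex \<Rightarrow> nat \<Rightarrow> complex" where
  "Bc a b n = 2 * (a + b) + 2 - 2 * of_nat n"
definition Pc :: "complex \<Rightarrow> complex \<Rightarrow> complex \<Rightarrow> complex \<Rightarrow> nat \<Rightarrow> complex" where
  "Pc l1 l2 a b m = - 2 * (of_nat m + 1) * (of_nat m + a + 1) * (of_nat m + b + l1 + l2)"
definition Qc :: "complex \<Rightarrow> complex \<Rightarrow> complex \<Rightarrow> complex \<Rightarrow> nat \<Rightarrow> complex" where
  "Qc l1 l2 a b n = 2 * (of_nat n + 1) * (of_nat n - b) * (of_nat n - a + l1 + l2 - 1)"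

lemma half_inv: "(w::complex) \<noteq> 0 \<Longrightarrow> inverse (2 * w) * w = 1/2"
  by (simp add: field_simps)

lemma Dv_nz:
  assumes "a + b \<notin> \<int>"
  shows "Dv a b m n \<noteq> 0"
proof
  assume "Dv a b m n = 0"
  moreover have "Dv a b m n = 2 * (a + b + 1 + of_nat m - of_nat n)" unfolding Dv_def by (simp add: algebra_simps)
  ultimately have z: "a + b + 1 + of_nat m - of_nat n = 0" by (metis mult_eq_0_iff zero_neq_numeral)
  have "a + b = (a + b + 1 + of_nat m - of_nat n) + (of_nat n - of_nat m - 1)" by (simp add: algebra_simps)
  also have "\<dots> = of_int (int n - int m - 1)" using z by simp
  finally have "a + b = of_int (int n - int m - 1)" .
  thus False using assms by (metis Ints_of_int)
qed

lemma DE_pt: "DeltaE l1 l2 a b v m n =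
  (Ac a b m * (if m = 0 then 0 else v (m - 1) n) + Bc a b n * (if n = 0 then 0 else v m (n - 1))) / Dv a b m n"
  unfolding DeltaE_def diag_def vadd_def E1_def E2_def Ac_def Bc_def Dv_def Dval_def h1_def h2_def
  by (simp add: field_simps)

lemma DF_pt:
  assumes hl1: "\<forall>j::nat. l1 \<noteq> - of_nat j" and hl2: "\<forall>j::nat. l2 \<noteq> - of_nat j"
  shows "DeltaF l1 l2 a b v m n = (Pc l1 l2 a b m * v (m + 1) n + Qc l1 l2 a b n * v m (n + 1)) / Dv a b m n"
proof -
  have n1: "l1 + of_nat m \<noteq> 0" using hl1 by (metis add.commute add_eq_0_iff)
  have n2: "l2 + of_nat n \<noteq> 0" using hl2 by (metis add.commute add_eq_0_iff)
  have e1: "(h1 l1 m n - l1 + 2*a + 2) * (h1 l1 m n - l1 + 2*b + 2*(l1+l2-1) + 2) * inverse (h1 l1 m n + l1)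
     * (- (of_nat (m + 1) * (of_nat (m + 1) + l1 - 1))) = Pc l1 l2 a b m"
  proof -
    have i1: "h1 l1 m n + l1 = 2 * (l1 + of_nat m)" by (simp add: h1_def)
    have i2: "of_nat (m+1) + l1 - 1 = l1 + of_nat m" by simp
    have key: "inverse (2 * (l1 + of_nat m)) * (l1 + of_nat m) = 1/2" using n1 by (rule half_inv)
    have "(h1 l1 m n - l1 + 2*a + 2) * (h1 l1 m n - l1 + 2*b + 2*(l1+l2-1) + 2) * inverse (h1 l1 m n + l1)
     * (- (of_nat (m + 1) * (of_nat (m + 1) + l1 - 1))) = (h1 l1 m n - l1 + 2*a + 2) * (h1 l1 m n - l1 + 2*b + 2*(l1+l2-1) + 2)
       * (- of_nat (m + 1)) * (inverse (2 * (l1 + of_nat m)) * (l1 + of_nat m))" unfolding i1 i2 by algebra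
    also have "\<dots> = Pc l1 l2 a b m" unfolding key by (simp add: h1_def Pc_def algebra_simps)
    finally show ?thesis .
  qed
  have e2: "(l2 - h2 l2 m n + 2*b) * (h2 l2 m n - l2 - 2*a + 2*(l1+l2-1)) * inverse (h2 l2 m n + l2)
     * (- (of_nat (n + 1) * (of_nat (n + 1) + l2 - 1))) = Qc l1 l2 a b n"
  proof -
    have i1: "h2 l2 m n + l2 = 2 * (l2 + of_nat n)" by (simp add: h2_def)
    have i2: "of_nat (n+1) + l2 - 1 = l2 + of_nat n" by simp
    have key: "inverse (2 * (l2 + of_nat n)) * (l2 + of_nat n) = 1/2" using n2 by (rule half_inv)
    have "(l2 - h2 l2 m n + 2*b) * (h2 l2 m n - l2 - 2*a + 2*(l1+l2-1)) * inverse (h2 l2 m n + l2)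
     * (- (of_nat (n + 1) * (of_nat (n + 1) + l2 - 1))) = (l2 - h2 l2 m n + 2*b) * (h2 l2 m n - l2 - 2*a + 2*(l1+l2-1))
       * (- of_nat (n + 1)) * (inverse (2 * (l2 + of_nat n)) * (l2 + of_nat n))" unfolding i1 i2 by algebra
    also have "\<dots> = Qc l1 l2 a b n" unfolding key by (simp add: h2_def Qc_def algebra_simps)
    finally show ?thesis .
  qed
  have dd: "Dval l1 l2 a b m n = Dv a b m n" unfolding Dval_def Dv_def h1_def h2_def by simp
  have "DeltaF l1 l2 a b v m n = inverse (Dv a b m n) *
     (((h1 l1 m n - l1 + 2*a + 2) * (h1 l1 m n - l1 + 2*b + 2*(l1+l2-1) + 2) * inverse (h1 l1 m n + l1)
     * (- (of_nat (m + 1) * (of_nat (m + 1) + l1 - 1)))) * v (m+1) n +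
      ((l2 - h2 l2 m n + 2*b) * (h2 l2 m n - l2 - 2*a + 2*(l1+l2-1)) * inverse (h2 l2 m n + l2)
     * (- (of_nat (n + 1) * (of_nat (n + 1) + l2 - 1)))) * v m (n+1))"
    unfolding DeltaF_def Let_def diag_def vadd_def F1_def F2_def dd by (simp only: mult.assoc)
  also have "\<dots> = (Pc l1 l2 a b m * v (m + 1) n + Qc l1 l2 a b n * v m (n + 1)) / Dv a b m n"
    unfolding e1 e2 by (simp add: divide_inverse mult.commute)
  finally show ?thesis .
qed

lemma DH_pt: "DeltaH l1 l2 v m n = (l1 + l2 + 2 * of_nat m + 2 * of_nat n) * v m n"
  unfolding DeltaH_def diag_def h1_def h2_def by (simp add: algebra_simps)

lemma Dv_Suc1: "Dv a b (Suc i) n = Dv a b i n + 2" unfolding Dv_def by (simp add: algebra_simps)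
lemma Dv_Suc2: "Dv a b m (Suc j) = Dv a b m j - 2" unfolding Dv_def by (simp add: algebra_simps)

lemma Dv_nz3:
  assumes "a + b \<notin> \<int>"
  shows "Dv a b i j \<noteq> 0" "Dv a b i j + 2 \<noteq> 0" "Dv a b i j - 2 \<noteq> 0" "Dv a b i j \<noteq> 2" "Dv a b i j \<noteq> -2"
    "2 + Dv a b i j \<noteq> 0" "-2 + Dv a b i j \<noteq> 0"
proof -
  show "Dv a b i j \<noteq> 0" using Dv_nz[OF assms] .
  show p: "Dv a b i j + 2 \<noteq> 0" using Dv_nz[OF assms, of "Suc i" j] by (simp add: Dv_Suc1)
  show q: "Dv a b i j - 2 \<noteq> 0" using Dv_nz[OF assms, of i "Suc j"] by (simp add: Dv_Suc2)
  show "Dv a b i j \<noteq> 2" using q by simp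
  show "Dv a b i j \<noteq> -2" using p by (metis add.commute add_eq_0_iff)
  show "2 + Dv a b i j \<noteq> 0" using p by (simp add: add.commute)
  show "-2 + Dv a b i j \<noteq> 0" using q by simp
qed

lemma comm_HE_pt:
  assumes hab: "a + b \<notin> \<int>"
  shows "commutator (DeltaH l1 l2) (DeltaE l1 l2 a b) v m n = vscale 2 (DeltaE l1 l2 a b v) m n"
  unfolding commutator_def vsub_def vscale_def
  using Dv_nz3[OF hab]
  by (cases m; cases n) (simp_all add: DE_pt DH_pt field_simps)

lemma comm_HF_pt:
  assumes hab: "a + b \<notin> \<int>" and hl1: "\<forall>j::nat. l1 \<noteq> - of_nat j" and hl2: "\<forall>j::nat. l2 \<noteq> - of_nat j"
  shows "commutator (DeltaH l1 l2) (DeltaF l1 l2 a b) v m n = vscale (-2) (DeltaF l1 l2 a b v) m n"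
  unfolding commutator_def vsub_def vscale_def
  using Dv_nz3[OF hab]
  by (simp add: DF_pt[OF hl1 hl2] DH_pt Dv_Suc1 Dv_Suc2 field_simps)

lemma ef_alg:
  fixes A B A1 B1 Pm1 Qn1 Pm Qn H d0 dm dp v0 v1 v2 :: complex
  assumes "d0 \<noteq> 0" "dm \<noteq> 0" "dp \<noteq> 0"
    and coef: "A * Pm1 * dp + B * Qn1 * dm - Pm * A1 * dm - Qn * B1 * dp = H * d0 * dm * dp"
  shows "(A * ((Pm1 * v0 + Qn * v1) / dm) + B * ((Pm * v2 + Qn1 * v0) / dp)) / d0
       - (Pm * ((A1 * v0 + B * v2) / dp) + Qn * ((A * v1 + B1 * v0) / dm)) / d0 = H * v0"
proof -
  have "(A * ((Pm1 * v0 + Qn * v1) / dm) + B * ((Pm * v2 + Qn1 * v0) / dp)) / d0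
       - (Pm * ((A1 * v0 + B * v2) / dp) + Qn * ((A * v1 + B1 * v0) / dm)) / d0
      = (A * Pm1 * dp + B * Qn1 * dm - Pm * A1 * dm - Qn * B1 * dp) * v0 / (d0 * dm * dp)"
    using assms(1-3) by (simp add: field_simps)
  also have "\<dots> = H * v0" using assms by (simp add: coef)
  finally show ?thesis .
qed

lemma coef_id:
  fixes M Nn a b pp qq :: complex
  defines "d0 \<equiv> 2 * M - 2 * Nn + 2 * (a + b) + 2"
  shows "(2 * M + 2 * (a + b) + 2) * (- 2 * M * (M + a) * (M - 1 + b + pp + qq)) * (d0 + 2)
     + (2 * (a + b) + 2 - 2 * Nn) * (2 * Nn * (Nn - 1 - b) * (Nn - 1 - a + pp + qq - 1)) * (d0 - 2)
     - (- 2 * (M + 1) * (M + a + 1) * (M + b + pp + qq)) * (2 * (M + 1) + 2 * (a + b) + 2) * (d0 - 2)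
     - (2 * (Nn + 1) * (Nn - b) * (Nn - a + pp + qq - 1)) * (2 * (a + b) + 2 - 2 * (Nn + 1)) * (d0 + 2)
     = (pp + qq + 2 * M + 2 * Nn) * d0 * (d0 - 2) * (d0 + 2)"
  unfolding d0_def by algebra

lemma EF_left:
  assumes hl1: "\<forall>j::nat. l1 \<noteq> - of_nat j" and hl2: "\<forall>j::nat. l2 \<noteq> - of_nat j"
  shows "DeltaE l1 l2 a b (DeltaF l1 l2 a b v) m n =
    (Ac a b m * (((if m = 0 then 0 else Pc l1 l2 a b (m - 1)) * v m n + Qc l1 l2 a b n * (if m = 0 then 0 else v (m - 1) (n + 1))) / (Dv a b m n - 2))
     + Bc a b n * ((Pc l1 l2 a b m * (if n = 0 then 0 else v (m + 1) (n - 1)) + (if n = 0 then 0 else Qc l1 l2 a b (n - 1)) * v m n) / (Dv a b m n + 2)))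
    / Dv a b m n"
  by (cases m; cases n) (simp_all add: DE_pt DF_pt[OF hl1 hl2] Dv_Suc1 Dv_Suc2)

lemma EF_right:
  assumes hl1: "\<forall>j::nat. l1 \<noteq> - of_nat j" and hl2: "\<forall>j::nat. l2 \<noteq> - of_nat j"
  shows "DeltaF l1 l2 a b (DeltaE l1 l2 a b v) m n =
    (Pc l1 l2 a b m * ((Ac a b (m + 1) * v m n + Bc a b n * (if n = 0 then 0 else v (m + 1) (n - 1))) / (Dv a b m n + 2))
     + Qc l1 l2 a b n * ((Ac a b m * (if m = 0 then 0 else v (m - 1) (n + 1)) + Bc a b (n + 1) * v m n) / (Dv a b m n - 2)))
    / Dv a b m n"
  by (cases m; cases n) (simp_all add: DE_pt DF_pt[OF hl1 hl2] Dv_Suc1 Dv_Suc2)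

lemma comm_EF_pt:
  assumes hab: "a + b \<notin> \<int>" and hl1: "\<forall>j::nat. l1 \<noteq> - of_nat j" and hl2: "\<forall>j::nat. l2 \<noteq> - of_nat j"
  shows "commutator (DeltaE l1 l2 a b) (DeltaF l1 l2 a b) v m n = DeltaH l1 l2 v m n"
proof -
  have p1: "(if m = 0 then 0 else Pc l1 l2 a b (m - 1)) = - 2 * of_nat m * (of_nat m + a) * (of_nat m - 1 + b + l1 + l2)"
    by (cases m) (simp_all add: Pc_def algebra_simps)
  have q1: "(if n = 0 then 0 else Qc l1 l2 a b (n - 1)) = 2 * of_nat n * (of_nat n - 1 - b) * (of_nat n - 1 - a + l1 + l2 - 1)"
    by (cases n) (simp_all add: Qc_def algebra_simps)
  have dv: "Dv a b m n = 2 * of_nat m - 2 * of_nat n + 2 * (a + b) + 2" by (simp add: Dv_def)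
  have coef: "Ac a b m * (if m = 0 then 0 else Pc l1 l2 a b (m - 1)) * (Dv a b m n + 2)
     + Bc a b n * (if n = 0 then 0 else Qc l1 l2 a b (n - 1)) * (Dv a b m n - 2)
     - Pc l1 l2 a b m * Ac a b (m + 1) * (Dv a b m n - 2)
     - Qc l1 l2 a b n * Bc a b (n + 1) * (Dv a b m n + 2)
     = (l1 + l2 + 2 * of_nat m + 2 * of_nat n) * Dv a b m n * (Dv a b m n - 2) * (Dv a b m n + 2)"
    unfolding p1 q1 unfolding dv Ac_def Bc_def Pc_def Qc_def of_nat_add of_nat_1 
    by (rule coef_id[where M="of_nat m" and Nn="of_nat n" and a=a and b=b and pp=l1 and qq=l2])
  show ?thesis
    unfolding commutator_def vsub_def EF_left[OF hl1 hl2] EF_right[OF hl1 hl2] DH_pt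
    by (rule ef_alg[OF Dv_nz3(1,3,2)[OF hab] coef])
qed

lemma E_alg:
  fixes M n1 J c y z w px px1 py py1 pz pz1 C1 Cm1 Cm :: complex
  assumes nz: "M \<noteq> 0" "y \<noteq> 0" "z \<noteq> 0" "w \<noteq> 0" "pz \<noteq> 0" "n1 \<noteq> 0"
    and ex: "M * px1 = (M - J) * px" and ey: "y * py1 = (y + J) * py" and ez: "z * pz1 = w * pz"
    and c1: "n1 * Cm1 = M * C1" and c2: "n1 * Cm = (n1 - M) * C1"
    and yd: "y = M + c - n1 + 1" and zd: "z = - n1" and wd: "w = z + J"
  shows "(2 * M + 2 * c + 2) * (Cm1 * (px1 * py / pz1)) + (2 * c + 2 - 2 * (n1 - M)) * (Cm * (px * py1 / pz1))
       = (2 * M - 2 * (n1 - M) + 2 * c + 2) * (C1 * (px * py / pz))"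
proof -
  have px1: "px1 = (M - J) * px / M" using ex nz by (simp add: field_simps)
  have py1: "py1 = (y + J) * py / y" using ey nz by (simp add: field_simps)
  have pz1: "pz1 = w * pz / z" using ez nz by (simp add: field_simps)
  have cm1: "Cm1 = M * C1 / n1" using c1 nz by (simp add: field_simps)
  have cm: "Cm = (n1 - M) * C1 / n1" using c2 nz by (simp add: field_simps)
  have key: "(2 * M + 2 * c + 2) * (M - J) * y + (2 * c + 2 - 2 * (n1 - M)) * (n1 - M) * (y + J)
     = (2 * M - 2 * (n1 - M) + 2 * c + 2) * y * (n1 - J)" unfolding yd by algebra
  have zz: "z / n1 = -1" unfolding zd using nz(6) by (metis minus_divide_left divide_self)
  have ww: "w = - (n1 - J)" unfolding wd zd by simp
  have "(2 * M + 2 * c + 2) * (Cm1 * (px1 * py / pz1)) + (2 * c + 2 - 2 * (n1 - M)) * (Cm * (px * py1 / pz1))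
      = C1 * px * py / pz * (z / n1) / (y * w) *
        ((2 * M + 2 * c + 2) * (M - J) * y + (2 * c + 2 - 2 * (n1 - M)) * (n1 - M) * (y + J))"
    unfolding px1 py1 pz1 cm1 cm using nz by (simp add: field_simps)
  also have "\<dots> = (2 * M - 2 * (n1 - M) + 2 * c + 2) * (C1 * (px * py / pz)) * (y * (n1 - J)) / (y * (- w))"
    unfolding key zz by (simp add: field_simps)
  also have "\<dots> = (2 * M - 2 * (n1 - M) + 2 * c + 2) * (C1 * (px * py / pz))"
    using nz unfolding ww by simp
  finally show ?thesis .
qed

lemma cnz: assumes "c \<notin> \<int>" shows "c + of_int t \<noteq> (0::complex)"
proof
  assume "c + of_int t = 0"
  hence "c = of_int (- t)" by (simp add: eq_neg_iff_add_eq_0)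
  thus False using assms by simp
qed

definition Kt :: "complex \<Rightarrow> complex \<Rightarrow> complex \<Rightarrow> nat \<Rightarrow> nat \<Rightarrow> complex" where
  "Kt a b g k j = pochhammer (- of_nat k) j * pochhammer (of_nat k + g) j
     / (fact j * pochhammer (a + 1) j * pochhammer (b + g + 1) j)"
definition Ut :: "complex \<Rightarrow> complex \<Rightarrow> nat \<Rightarrow> nat \<Rightarrow> nat \<Rightarrow> complex" where
  "Ut a b n N j = pochhammer (- of_nat n) j * pochhammer (of_nat n + a + b - of_nat N + 1) j / pochhammer (- of_nat N) j"

lemma poch_shift: "x * pochhammer (x + 1) j = (x + of_nat j) * pochhammer (x::complex) j"
  using pochhammer_rec[of x j] pochhammer_rec'[of x j] by simp

lemma E_term:
  assumes hab: "a + b \<notin> \<int>" and jN: "j \<le> N" and mN: "m \<le> N + 1"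
  shows "Ac a b m * (if m = 0 then 0 else of_nat (N choose (m - 1)) * Ut a b (m - 1) N j)
       + Bc a b (N + 1 - m) * (of_nat (N choose m) * Ut a b m N j)
       = Dv a b m (N + 1 - m) * (of_nat (N + 1 choose m) * Ut a b m (N + 1) j)"
proof (cases m)
  case 0
  then show ?thesis
  proof (cases j)
    case 0 thus ?thesis using \<open>m = 0\<close> by (simp add: Ut_def Bc_def Dv_def algebra_simps)
  next
    case (Suc i) thus ?thesis using \<open>m = 0\<close> by (simp add: Ut_def pochhammer_rec)
  qed
next
  case (Suc i)
  define M where "M = (of_nat m :: complex)"
  define n1 where "n1 = (of_nat N + 1 :: complex)"
  define J where "J = (of_nat j :: complex)"
  define c where "c = a + b"
  define y where "y = M + c - n1 + 1"
  define z where "z = - n1"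
  define w where "w = z + J"
  have a1: "- of_nat (m - 1) = - M + 1" "of_nat (m - 1) + a + b - of_nat N + 1 = y" "- of_nat N = z + 1"
    unfolding M_def y_def z_def n1_def c_def using Suc by simp_all
  have a2: "- of_nat m = - M" "of_nat m + a + b - of_nat N + 1 = y + 1"
    unfolding M_def y_def z_def n1_def c_def by simp_all
  have a3: "of_nat m + a + b - of_nat (N + 1) + 1 = y" "- of_nat (N + 1) = z"
    unfolding M_def y_def z_def n1_def c_def by simp_all
  have u1: "Ut a b (m - 1) N j = pochhammer (- M + 1) j * pochhammer y j / pochhammer (z + 1) j"
    unfolding Ut_def a1 ..
  have u2: "Ut a b m N j = pochhammer (- M) j * pochhammer (y + 1) j / pochhammer (z + 1) j"
    unfolding Ut_def a2 a1(3) ..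
  have u3: "Ut a b m (N + 1) j = pochhammer (- M) j * pochhammer y j / pochhammer z j"
    unfolding Ut_def a2(1) a3 ..
  have ex: "M * pochhammer (- M + 1) j = (M - J) * pochhammer (- M) j"
    using poch_shift[of "- M" j] unfolding J_def by (simp add: algebra_simps)
  have ey: "y * pochhammer (y + 1) j = (y + J) * pochhammer y j"
    using poch_shift[of y j] unfolding J_def by simp
  have ez: "z * pochhammer (z + 1) j = w * pochhammer z j"
    using poch_shift[of z j] unfolding J_def w_def by simp
  have c1: "n1 * of_nat (N choose (m - 1)) = M * of_nat (N + 1 choose m)"
  proof -
    have e: "(of_nat (Suc i) :: complex) * of_nat (Suc N choose Suc i) = of_nat (Suc N) * of_nat (N choose i)"
      by (metis of_nat_mult Suc_times_binomial)
    have n1': "n1 = of_nat (Suc N)" by (simp add: n1_def)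
    have M': "M = of_nat (Suc i)" by (simp add: M_def Suc)
    show ?thesis unfolding n1' M' Suc using e by simp
  qed
  have c2: "n1 * of_nat (N choose m) = (n1 - M) * of_nat (N + 1 choose m)"
  proof -
    have "(N + 1 - m) * (N + 1 choose m) = (N + 1) * ((N + 1 - 1) choose m)" by (rule binomial_absorb_comp)
    hence e: "(of_nat (N + 1 - m) :: complex) * of_nat (N + 1 choose m) = of_nat (N + 1) * of_nat (N choose m)"
      by (metis of_nat_mult diff_add_inverse2)
    have d: "(of_nat (N + 1 - m) :: complex) = n1 - M" unfolding n1_def M_def using mN by simp
    have n1': "n1 = of_nat (N + 1)" by (simp add: n1_def)
    show ?thesis using e unfolding d n1'[symmetric] by simp
  qed
  have nzM: "M \<noteq> 0" unfolding M_def using Suc by (metis of_nat_eq_0_iff nat.distinct(1))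
  have nzy: "y \<noteq> 0"
  proof -
    have "y = a + b + of_int (int m - int N)" unfolding y_def M_def n1_def c_def by simp
    thus ?thesis using cnz[OF hab, of "int m - int N"] by metis
  qed
  have nzz: "z \<noteq> 0" unfolding z_def n1_def by (metis add_eq_0_iff neg_equal_0_iff_equal of_nat_Suc of_nat_eq_0_iff nat.distinct(1) add.commute)
  have nzw: "w \<noteq> 0"
  proof -
    have hw: "w = - of_nat (N + 1 - j)" unfolding w_def z_def n1_def J_def using jN by simp
    have "(of_nat (N + 1 - j) :: complex) \<noteq> 0" using jN by (simp only: of_nat_eq_0_iff)
    thus ?thesis unfolding hw by (metis neg_equal_0_iff_equal)
  qed
  have nzpz: "pochhammer z j \<noteq> 0"
    unfolding a3(2)[symmetric] pochhammer_of_nat_eq_0_iff using jN by simp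
  have nzn1: "n1 \<noteq> 0" unfolding n1_def by (metis of_nat_Suc of_nat_eq_0_iff nat.distinct(1) add.commute)
  have bc: "Bc a b (N + 1 - m) = 2 * c + 2 - 2 * (n1 - M)" unfolding Bc_def c_def n1_def M_def using mN by simp
  have dv: "Dv a b m (N + 1 - m) = 2 * M - 2 * (n1 - M) + 2 * c + 2" unfolding Dv_def c_def n1_def M_def using mN by simp
  have ac: "Ac a b m = 2 * M + 2 * c + 2" unfolding Ac_def c_def M_def by simp
  show ?thesis
    unfolding u1 u2 u3 bc dv ac using Suc
    using E_alg[OF nzM nzy nzz nzw nzpz nzn1 ex ey ez c1 c2 y_def z_def w_def] by simp
qed

lemma Rcoef_alt: "Rcoef a b g n k N = of_nat (N choose n) * (\<Sum>j = 0..k. Kt a b g k j * Ut a b n N j)"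
proof -
  have "(\<Sum>j = 0..min n k.
        pochhammer (- of_nat n) j * pochhammer (of_nat n + a + b - of_nat N + 1) j
        * pochhammer (- of_nat k) j * pochhammer (of_nat k + g) j
        / (fact j * pochhammer (a + 1) j * pochhammer (b + g + 1) j * pochhammer (- of_nat N) j))
      = (\<Sum>j = 0..min n k. Kt a b g k j * Ut a b n N j)"
    by (rule sum.cong) (simp_all add: Kt_def Ut_def times_divide_times_eq ac_simps)
  also have "\<dots> = (\<Sum>j = 0..k. Kt a b g k j * Ut a b n N j)"
  proof (rule sum.mono_neutral_left)
    show "\<forall>i\<in>{0..k} - {0..min n k}. Kt a b g k i * Ut a b n N i = 0"
    proof
      fix i assume "i \<in> {0..k} - {0..min n k}"
      hence "n < i" by auto
      hence "pochhammer (- of_nat n :: complex) i = 0" by (simp add: pochhammer_of_nat_eq_0_iff)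
      thus "Kt a b g k i * Ut a b n N i = 0" by (simp add: Ut_def)
    qed
  qed auto
  finally show ?thesis unfolding Rcoef_def by simp
qed

lemma E_rec:
  assumes hab: "a + b \<notin> \<int>" and kN: "k \<le> N" and mN: "m \<le> N + 1"
  shows "Ac a b m * (if m = 0 then 0 else Rcoef a b g (m - 1) k N) + Bc a b (N + 1 - m) * Rcoef a b g m k N
       = Dv a b m (N + 1 - m) * Rcoef a b g m k (N + 1)"
proof -
  have r1: "(if m = 0 then 0 else Rcoef a b g (m - 1) k N)
     = (\<Sum>j = 0..k. Kt a b g k j * (if m = 0 then 0 else of_nat (N choose (m - 1)) * Ut a b (m - 1) N j))"
    by (cases m) (simp_all add: Rcoef_alt sum_distrib_left ac_simps)
  have "Ac a b m * (if m = 0 then 0 else Rcoef a b g (m - 1) k N) + Bc a b (N + 1 - m) * Rcoef a b g m k N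
     = (\<Sum>j = 0..k. Kt a b g k j * (Ac a b m * (if m = 0 then 0 else of_nat (N choose (m - 1)) * Ut a b (m - 1) N j)
       + Bc a b (N + 1 - m) * (of_nat (N choose m) * Ut a b m N j)))"
    unfolding r1 Rcoef_alt by (simp add: sum_distrib_left sum.distrib algebra_simps)
  also have "\<dots> = (\<Sum>j = 0..k. Kt a b g k j * (Dv a b m (N + 1 - m) * (of_nat (N + 1 choose m) * Ut a b m (N + 1) j)))"
    by (rule sum.cong) (use E_term[OF hab _ mN] kN in auto)
  also have "\<dots> = Dv a b m (N + 1 - m) * Rcoef a b g m k (N + 1)"
    unfolding Rcoef_alt by (simp add: sum_distrib_left algebra_simps)
  finally show ?thesis .
qed

lemma DeltaE_w:
  assumes hab: "a + b \<notin> \<int>" and kN: "k \<le> N"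
  shows "DeltaE l1 l2 a b (wvec a b g k N) = wvec a b g k (N + 1)"
proof (rule ext, rule ext)
  fix m n
  show "DeltaE l1 l2 a b (wvec a b g k N) m n = wvec a b g k (N + 1) m n"
  proof (cases "m + n = N + 1")
    case True
    hence nn: "n = N + 1 - m" and mN: "m \<le> N + 1" by auto
    have z: "Rcoef a b g (N + 1) k N = 0" by (simp add: Rcoef_def)
    have "(Ac a b m * (if m = 0 then 0 else wvec a b g k N (m - 1) n) + Bc a b n * (if n = 0 then 0 else wvec a b g k N m (n - 1)))
        = Ac a b m * (if m = 0 then 0 else Rcoef a b g (m - 1) k N) + Bc a b (N + 1 - m) * Rcoef a b g m k N"
      unfolding wvec_def using True z nn by (cases m; cases n) auto
    also have "\<dots> = Dv a b m n * Rcoef a b g m k (N + 1)" unfolding nn by (rule E_rec[OF hab kN mN])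
    finally show ?thesis unfolding DE_pt wvec_def using True Dv_nz[OF hab, of m n] by simp
  next
    case False
    thus ?thesis unfolding DE_pt wvec_def by (cases m; cases n) auto
  qed
qed

lemma F_alg:
  fixes M NN J a b g x y z m1 d qx qy qz Cp Cm C0 :: complex
  assumes nz: "m1 \<noteq> 0" "d \<noteq> 0" "z \<noteq> 0" "qz \<noteq> 0"
    and m1d: "m1 = M + 1" and dd: "d = NN - M"
    and xd: "x = - M - 1" and yd: "y = M + a + b - NN + 1" and zd: "z = - NN"
    and c1: "m1 * Cp = NN * C0" and c2: "d * Cm = NN * C0"
  shows "(- 2 * m1 * (M + a + 1) * (M + b + g + 1)) * (Cp * (x * qx * ((y + J) * qy) / (z * qz)))
       + (2 * d * (NN - 1 - M - b) * (NN - 1 - M - a + g)) * (Cm * ((x + J) * qx * (y * qy) / (z * qz)))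
       = (2 * M - 2 * (NN - 1 - M) + 2 * (a + b) + 2) *
         (C0 * (- (NN + J + g) * (- ((x + J) * qx * ((y + J) * qy)) / qz) - J * (a + J) * (b + g + J) * (qx * qy / qz)))"
proof -
  define u where "u = qx * qy / qz"
  define A where "A = (M + a + 1) * (M + b + g + 1)"
  define Q2 where "Q2 = (NN - 1 - M - b) * (NN - 1 - M - a + g)"
  have NNz: "NN \<noteq> 0" using nz(3) zd by simp
  have f1: "x * qx * ((y + J) * qy) / (z * qz) = - (x * (y + J) * u) / NN"
    unfolding u_def zd using nz NNz by (simp add: field_simps)
  have f2: "(x + J) * qx * (y * qy) / (z * qz) = - ((x + J) * y * u) / NN"
    unfolding u_def zd using nz NNz by (simp add: field_simps)
  have f3: "- (NN + J + g) * (- ((x + J) * qx * ((y + J) * qy)) / qz) - J * (a + J) * (b + g + J) * (qx * qy / qz)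
      = ((NN + J + g) * (x + J) * (y + J) - J * (a + J) * (b + g + J)) * u"
    unfolding u_def using nz by (simp add: field_simps)
  have e1: "(- 2 * m1 * (M + a + 1) * (M + b + g + 1)) * Cp = - 2 * A * (NN * C0)"
    unfolding A_def c1[symmetric] by (simp add: ac_simps)
  have e2: "(2 * d * (NN - 1 - M - b) * (NN - 1 - M - a + g)) * Cm = 2 * Q2 * (NN * C0)"
    unfolding Q2_def c2[symmetric] by (simp add: ac_simps)
  have "(- 2 * m1 * (M + a + 1) * (M + b + g + 1)) * (Cp * (x * qx * ((y + J) * qy) / (z * qz)))
       + (2 * d * (NN - 1 - M - b) * (NN - 1 - M - a + g)) * (Cm * ((x + J) * qx * (y * qy) / (z * qz)))
      = ((- 2 * m1 * (M + a + 1) * (M + b + g + 1)) * Cp) * (x * qx * ((y + J) * qy) / (z * qz))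
       + ((2 * d * (NN - 1 - M - b) * (NN - 1 - M - a + g)) * Cm) * ((x + J) * qx * (y * qy) / (z * qz))"
    by (simp only: mult.assoc)
  also have "\<dots> = - 2 * A * C0 * (NN * (- (x * (y + J) * u) / NN)) + 2 * Q2 * C0 * (NN * (- ((x + J) * y * u) / NN))"
    unfolding e1 e2 f1 f2 by (simp only: ac_simps)
  also have "\<dots> = C0 * u * (2 * A * x * (y + J) - 2 * Q2 * (x + J) * y)"
  proof -
    have cancel: "\<And>X. NN * (X / NN) = X" using NNz by simp
    show ?thesis unfolding cancel by (simp add: algebra_simps)
  qed
  also have "\<dots> = C0 * u * ((2 * M - 2 * (NN - 1 - M) + 2 * (a + b) + 2) * ((NN + J + g) * (x + J) * (y + J) - J * (a + J) * (b + g + J)))"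
    unfolding A_def Q2_def xd yd by algebra
  also have "\<dots> = (2 * M - 2 * (NN - 1 - M) + 2 * (a + b) + 2) *
         (C0 * (- (NN + J + g) * (- ((x + J) * qx * ((y + J) * qy)) / qz) - J * (a + J) * (b + g + J) * (qx * qy / qz)))"
    unfolding f3 by (simp only: ac_simps)
  finally show ?thesis .
qed

lemma F_alg0:
  fixes M NN a b g m1 d Cp Cm C0 :: complex
  assumes m1d: "m1 = M + 1" and dd: "d = NN - M"
    and c1: "m1 * Cp = NN * C0" and c2: "d * Cm = NN * C0"
  shows "(- 2 * m1 * (M + a + 1) * (M + b + g + 1)) * Cp
       + (2 * d * (NN - 1 - M - b) * (NN - 1 - M - a + g)) * Cm
       = (2 * M - 2 * (NN - 1 - M) + 2 * (a + b) + 2) * (C0 * (- (NN * (NN + g))))"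
proof -
  have e1: "(- 2 * m1 * (M + a + 1) * (M + b + g + 1)) * Cp = - 2 * ((M + a + 1) * (M + b + g + 1)) * (NN * C0)"
    unfolding c1[symmetric] by (simp only: ac_simps)
  have e2: "(2 * d * (NN - 1 - M - b) * (NN - 1 - M - a + g)) * Cm = 2 * ((NN - 1 - M - b) * (NN - 1 - M - a + g)) * (NN * C0)"
    unfolding c2[symmetric] by (simp only: ac_simps)
  show ?thesis unfolding e1 e2 by algebra
qed

lemma F_term:
  assumes hab: "a + b \<notin> \<int>" and hg: "g = l1 + l2 - 1" and mN: "m < N" and jN: "j \<le> N"
  shows "Pc l1 l2 a b m * (of_nat (N choose (m + 1)) * Ut a b (m + 1) N j)
       + Qc l1 l2 a b (N - 1 - m) * (of_nat (N choose m) * Ut a b m N j)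
     = Dv a b m (N - 1 - m) * (of_nat (N - 1 choose m) *
         (- (of_nat (N - j) * (of_nat N + of_nat j + g)) * Ut a b m (N - 1) j
          - (if j = 0 then 0 else of_nat j * (a + of_nat j) * (b + g + of_nat j) * Ut a b m (N - 1) (j - 1))))"
proof -
  obtain N' where NS: "N = Suc N'" using mN by (cases N) auto
  define M where "M = (of_nat m :: complex)"
  define NN where "NN = (of_nat N :: complex)"
  define m1 where "m1 = M + 1"
  define d where "d = NN - M"
  define C0 where "C0 = (of_nat (N - 1 choose m) :: complex)"
  define Cp where "Cp = (of_nat (N choose (m + 1)) :: complex)"
  define Cm where "Cm = (of_nat (N choose m) :: complex)"
  have c1: "m1 * Cp = NN * C0"
  proof -
    have e: "(of_nat (Suc m) :: complex) * of_nat (Suc N' choose Suc m) = of_nat (Suc N') * of_nat (N' choose m)"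
      by (metis of_nat_mult Suc_times_binomial)
    show ?thesis unfolding m1_def Cp_def NN_def C0_def M_def NS using e by (simp add: add.commute)
  qed
  have c2: "d * Cm = NN * C0"
  proof -
    have "(N - m) * (N choose m) = N * ((N - 1) choose m)" by (rule binomial_absorb_comp)
    hence e: "(of_nat (N - m) :: complex) * of_nat (N choose m) = of_nat N * of_nat ((N - 1) choose m)"
      by (metis of_nat_mult)
    have dd: "(of_nat (N - m) :: complex) = d" unfolding d_def NN_def M_def using mN by simp
    show ?thesis using e unfolding dd Cm_def NN_def C0_def .
  qed
  have nzm1: "m1 \<noteq> 0" unfolding m1_def M_def by (metis of_nat_Suc of_nat_eq_0_iff nat.distinct(1) add.commute)
  have nzd: "d \<noteq> 0"
  proof -
    have "d = of_nat (N - m)" unfolding d_def NN_def M_def using mN by simp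
    moreover have "(of_nat (N - m) :: complex) \<noteq> 0" using mN by (simp only: of_nat_eq_0_iff)
    ultimately show ?thesis by simp
  qed
  have pc: "Pc l1 l2 a b m = - 2 * m1 * (M + a + 1) * (M + b + g + 1)"
    unfolding Pc_def m1_def M_def hg by (simp add: algebra_simps)
  have qc: "Qc l1 l2 a b (N - 1 - m) = 2 * d * (NN - 1 - M - b) * (NN - 1 - M - a + g)"
    unfolding Qc_def d_def NN_def M_def hg using mN by (simp add: of_nat_diff algebra_simps)
  have dv: "Dv a b m (N - 1 - m) = 2 * M - 2 * (NN - 1 - M) + 2 * (a + b) + 2"
    unfolding Dv_def NN_def M_def using mN by (simp add: of_nat_diff algebra_simps)
  show ?thesis
  proof (cases j)
    case 0
    have "Pc l1 l2 a b m * Cp + Qc l1 l2 a b (N - 1 - m) * Cm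
       = Dv a b m (N - 1 - m) * (C0 * (- (NN * (NN + g))))"
      unfolding pc qc dv by (rule F_alg0[OF m1_def d_def c1 c2])
    thus ?thesis using 0 unfolding Cp_def Cm_def C0_def NN_def by (simp add: Ut_def)
  next
    case (Suc i)
    define J where "J = (of_nat j :: complex)"
    define x where "x = - M - 1"
    define y where "y = M + a + b - NN + 1"
    define z where "z = - NN"
    define qx where "qx = pochhammer (x + 1) i"
    define qy where "qy = pochhammer (y + 1) i"
    define qz where "qz = pochhammer (z + 1) i"
    have JI: "J = of_nat i + 1" unfolding J_def Suc by simp
    have nzz: "z \<noteq> 0" unfolding z_def NN_def NS by (metis of_nat_Suc of_nat_eq_0_iff nat.distinct(1) add.commute neg_equal_0_iff_equal)
    have zN: "z + 1 = - of_nat (N - 1)" unfolding z_def NN_def NS by simp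
    have nzqz: "qz \<noteq> 0" unfolding qz_def zN pochhammer_of_nat_eq_0_iff using jN Suc by simp
    have u1: "Ut a b (m + 1) N j = x * qx * ((y + J) * qy) / (z * qz)"
    proof -
      have h: "- of_nat (m + 1) = x" "of_nat (m + 1) + a + b - of_nat N + 1 = y + 1" "- of_nat N = z"
        unfolding x_def y_def z_def M_def NN_def by simp_all
      show ?thesis unfolding Ut_def Suc h unfolding qx_def qy_def qz_def pochhammer_rec[of x] pochhammer_rec'[of "y + 1"] pochhammer_rec[of z] JI
        by (simp add: ac_simps)
    qed
    have u2: "Ut a b m N j = (x + J) * qx * (y * qy) / (z * qz)"
    proof -
      have h: "- of_nat m = x + 1" "of_nat m + a + b - of_nat N + 1 = y" "- of_nat N = z"
        unfolding x_def y_def z_def M_def NN_def by simp_all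
      show ?thesis unfolding Ut_def Suc h unfolding qx_def qy_def qz_def pochhammer_rec'[of "x + 1"] pochhammer_rec[of y] pochhammer_rec[of z] JI
        by (simp add: ac_simps)
    qed
    have u3: "Ut a b m (N - 1) (j - 1) = qx * qy / qz"
    proof -
      have h: "- of_nat m = x + 1" "of_nat m + a + b - of_nat (N - 1) + 1 = y + 1" "- of_nat (N - 1) = z + 1"
        unfolding x_def y_def z_def M_def NN_def NS by simp_all
      show ?thesis unfolding Ut_def Suc h unfolding qx_def qy_def qz_def by simp
    qed
    have u4: "of_nat (N - j) * Ut a b m (N - 1) j = - ((x + J) * qx * ((y + J) * qy)) / qz"
    proof -
      have h: "- of_nat m = x + 1" "of_nat m + a + b - of_nat (N - 1) + 1 = y + 1" "- of_nat (N - 1) = z + 1"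
        unfolding x_def y_def z_def M_def NN_def NS by simp_all
      have ut: "Ut a b m (N - 1) j = (x + J) * qx * ((y + J) * qy) / ((z + J) * qz)"
        unfolding Ut_def Suc h unfolding qx_def qy_def qz_def pochhammer_rec'[of "x + 1"] pochhammer_rec'[of "y + 1"]
          pochhammer_rec'[of "z + 1"] JI by (simp add: ac_simps)
      have zJ: "z + J = - of_nat (N - j)" unfolding z_def J_def NN_def using jN by simp
      show ?thesis
      proof (cases "j = N")
        case True
        have "(x + J) * qx = pochhammer (- of_nat m) j"
          unfolding h(1) Suc unfolding qx_def pochhammer_rec'[of "x + 1"] JI by simp
        also have "\<dots> = 0" using mN True by (simp add: pochhammer_of_nat_eq_0_iff)
        finally show ?thesis using True by simp
      next
        case False
        hence "(of_nat (N - j) :: complex) \<noteq> 0" using jN by (simp only: of_nat_eq_0_iff)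
        thus ?thesis unfolding ut zJ using nzqz by (simp add: field_simps)
      qed
    qed
    have r: "- (of_nat (N - j) * (of_nat N + of_nat j + g)) * Ut a b m (N - 1) j
        = - (NN + J + g) * (- ((x + J) * qx * ((y + J) * qy)) / qz)"
    proof -
      have "- (of_nat (N - j) * (of_nat N + of_nat j + g)) * Ut a b m (N - 1) j
        = - (NN + J + g) * (of_nat (N - j) * Ut a b m (N - 1) j)"
        unfolding NN_def J_def by (simp add: algebra_simps del: of_nat_diff)
      thus ?thesis unfolding u4 .
    qed
    have main: "Pc l1 l2 a b m * (Cp * (x * qx * ((y + J) * qy) / (z * qz)))
       + Qc l1 l2 a b (N - 1 - m) * (Cm * ((x + J) * qx * (y * qy) / (z * qz)))
       = Dv a b m (N - 1 - m) * (C0 * (- (NN + J + g) * (- ((x + J) * qx * ((y + J) * qy)) / qz)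
            - J * (a + J) * (b + g + J) * (qx * qy / qz)))"
      unfolding pc qc dv
      by (rule F_alg[OF nzm1 nzd nzz nzqz m1_def d_def _ y_def z_def c1 c2]) (simp add: x_def m1_def)
    have ifr: "(if j = 0 then 0 else of_nat j * (a + of_nat j) * (b + g + of_nat j) * Ut a b m (N - 1) (j - 1))
        = J * (a + J) * (b + g + J) * (qx * qy / qz)"
      using Suc u3 by (simp add: J_def)
    show ?thesis
      unfolding u1 u2 r ifr Cp_def[symmetric] Cm_def[symmetric] C0_def[symmetric] by (rule main)
  qed
qed

definition rr :: "complex \<Rightarrow> complex \<Rightarrow> complex \<Rightarrow> nat \<Rightarrow> complex" where
  "rr a b g j = (of_nat j + 1) * (a + 1 + of_nat j) * (b + g + 1 + of_nat j)"

lemma Kt_rec: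
  assumes ha: "\<forall>j::nat. a \<noteq> - of_nat (Suc j)" and hbg: "\<forall>j::nat. b + g \<noteq> - of_nat (Suc j)"
  shows "rr a b g j * Kt a b g k (Suc j) = (of_nat j - of_nat k) * (of_nat j + of_nat k + g) * Kt a b g k j"
proof -
  define P where "P = pochhammer (- of_nat k) j * pochhammer (of_nat k + g) j"
  define Q where "Q = fact j * pochhammer (a + 1) j * pochhammer (b + g + 1) j"
  have r0: "rr a b g j \<noteq> 0"
  proof -
    have "a + 1 + of_nat j \<noteq> 0" using ha by (metis add.commute add.left_commute add_eq_0_iff of_nat_Suc)
    moreover have "b + g + 1 + of_nat j \<noteq> 0" using hbg by (metis add.commute add.left_commute add_eq_0_iff of_nat_Suc)
    moreover have "(of_nat j + 1 :: complex) \<noteq> 0" by (metis of_nat_Suc of_nat_eq_0_iff nat.distinct(1) add.commute)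
    ultimately show ?thesis unfolding rr_def by simp
  qed
  have k1: "Kt a b g k (Suc j) = ((of_nat j - of_nat k) * (of_nat j + of_nat k + g) * P) / (rr a b g j * Q)"
    unfolding Kt_def P_def Q_def rr_def pochhammer_rec' fact_Suc by (simp add: algebra_simps)
  have k0: "Kt a b g k j = P / Q" unfolding Kt_def P_def Q_def ..
  show ?thesis unfolding k1 k0 using r0 by (cases "Q = 0") (simp_all add: field_simps)
qed

lemma Kt_zero: "k < j \<Longrightarrow> Kt a b g k j = 0"
  unfolding Kt_def by (simp add: pochhammer_of_nat_eq_0_iff)

lemma F_rec:
  assumes hab: "a + b \<notin> \<int>" and ha: "\<forall>j::nat. a \<noteq> - of_nat (Suc j)"
    and hbg: "\<forall>j::nat. b + g \<noteq> - of_nat (Suc j)" and hg: "g = l1 + l2 - 1"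
    and kN: "k \<le> N" and mN: "m < N"
  shows "Pc l1 l2 a b m * Rcoef a b g (m + 1) k N + Qc l1 l2 a b (N - 1 - m) * Rcoef a b g m k N
     = Dv a b m (N - 1 - m) * (- (of_nat (N - k) * (of_nat N + of_nat k + g)) * Rcoef a b g m k (N - 1))"
proof -
  define U where "U = (\<lambda>j. Ut a b m (N - 1) j)"
  define T1 where "T1 = (\<lambda>j. - (of_nat (N - j) * (of_nat N + of_nat j + g)) * U j)"
  define T2 where "T2 = (\<lambda>j. if j = 0 then 0 else of_nat j * (a + of_nat j) * (b + g + of_nat j) * U (j - 1))"
  define D where "D = Dv a b m (N - 1 - m)"
  define C0 where "C0 = (of_nat (N - 1 choose m) :: complex)"
  define K where "K = (\<lambda>j. Kt a b g k j)"
  have s1: "Pc l1 l2 a b m * Rcoef a b g (m + 1) k N + Qc l1 l2 a b (N - 1 - m) * Rcoef a b g m k N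
      = (\<Sum>j = 0..k. K j * (Pc l1 l2 a b m * (of_nat (N choose (m + 1)) * Ut a b (m + 1) N j)
          + Qc l1 l2 a b (N - 1 - m) * (of_nat (N choose m) * Ut a b m N j)))"
    unfolding Rcoef_alt K_def by (simp add: sum_distrib_left sum.distrib algebra_simps)
  also have "\<dots> = (\<Sum>j = 0..k. K j * (D * (C0 * (T1 j - T2 j))))"
    by (rule sum.cong) (use F_term[OF hab hg mN] kN in \<open>auto simp: D_def C0_def T1_def T2_def U_def\<close>)
  also have "\<dots> = D * C0 * ((\<Sum>j = 0..k. K j * T1 j) - (\<Sum>j = 0..k. K j * T2 j))"
    by (simp add: sum_distrib_left sum_subtractf algebra_simps)
  also have "(\<Sum>j = 0..k. K j * T2 j) = (\<Sum>j = 0..k. rr a b g j * K (Suc j) * U j)"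
  proof (cases k)
    case 0
    thus ?thesis by (simp add: T2_def K_def Kt_zero)
  next
    case (Suc k')
    have "(\<Sum>j = 0..k. K j * T2 j) = K 0 * T2 0 + (\<Sum>i = 0..k'. K (Suc i) * T2 (Suc i))"
      unfolding Suc by (subst sum.atLeast0_atMost_Suc_shift) (simp only: o_def)
    also have "\<dots> = (\<Sum>i = 0..k'. rr a b g i * K (Suc i) * U i)"
      by (simp add: T2_def rr_def algebra_simps)
    also have "\<dots> = (\<Sum>i = 0..k. rr a b g i * K (Suc i) * U i)"
      unfolding Suc by (simp add: K_def Kt_zero Suc)
    finally show ?thesis .
  qed
  also have "D * C0 * ((\<Sum>j = 0..k. K j * T1 j) - (\<Sum>j = 0..k. rr a b g j * K (Suc j) * U j))
      = D * C0 * (\<Sum>j = 0..k. - (of_nat (N - k) * (of_nat N + of_nat k + g)) * K j * U j)"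
  proof -
    have "(\<Sum>j = 0..k. K j * T1 j) - (\<Sum>j = 0..k. rr a b g j * K (Suc j) * U j)
        = (\<Sum>j = 0..k. K j * T1 j - rr a b g j * K (Suc j) * U j)" by (simp add: sum_subtractf)
    also have "\<dots> = (\<Sum>j = 0..k. - (of_nat (N - k) * (of_nat N + of_nat k + g)) * K j * U j)"
    proof (rule sum.cong)
      fix j assume "j \<in> {0..k}"
      hence jk: "j \<le> k" by simp
      have kr: "rr a b g j * K (Suc j) = (of_nat j - of_nat k) * (of_nat j + of_nat k + g) * K j"
        unfolding K_def by (rule Kt_rec[OF ha hbg])
      have nk: "(of_nat (N - k) :: complex) = of_nat N - of_nat k" using kN by simp
      have nj: "(of_nat (N - j) :: complex) = of_nat N - of_nat j" using kN jk by simp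
      show "K j * T1 j - rr a b g j * K (Suc j) * U j = - (of_nat (N - k) * (of_nat N + of_nat k + g)) * K j * U j"
        unfolding T1_def kr nk nj by (simp add: algebra_simps)
    qed simp
    finally show ?thesis by simp
  qed
  also have "\<dots> = Dv a b m (N - 1 - m) * (- (of_nat (N - k) * (of_nat N + of_nat k + g)) * Rcoef a b g m k (N - 1))"
    unfolding Rcoef_alt D_def C0_def K_def U_def by (simp add: sum_distrib_left algebra_simps)
  finally show ?thesis .
qed

lemma DeltaF_w:
  assumes hab: "a + b \<notin> \<int>" and ha: "\<forall>j::nat. a \<noteq> - of_nat (Suc j)"
    and hbg: "\<forall>j::nat. b + g \<noteq> - of_nat (Suc j)" and hg: "g = l1 + l2 - 1"
    and hl1: "\<forall>j::nat. l1 \<noteq> - of_nat j" and hl2: "\<forall>j::nat. l2 \<noteq> - of_nat j"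
    and kN: "k \<le> N"
  shows "DeltaF l1 l2 a b (wvec a b g k N) =
    (if N = k then vzero else vscale (- (of_nat (N - k) * (of_nat N + of_nat k + g))) (wvec a b g k (N - 1)))"
proof (rule ext, rule ext)
  fix m n
  define c where "c = - (of_nat (N - k) * (of_nat N + of_nat k + g))"
  have rhs: "(if N = k then vzero else vscale c (wvec a b g k (N - 1))) m n
     = c * (if m + n + 1 = N then Rcoef a b g m k (N - 1) else 0)"
  proof (cases "N = k")
    case True thus ?thesis by (simp add: c_def vzero_def)
  next
    case False
    hence "N \<noteq> 0" using kN by auto
    thus ?thesis using False unfolding vscale_def wvec_def by auto
  qed
  have lhs: "DeltaF l1 l2 a b (wvec a b g k N) m n = c * (if m + n + 1 = N then Rcoef a b g m k (N - 1) else 0)"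
  proof (cases "m + n + 1 = N")
    case True
    hence mN: "m < N" and nn: "n = N - 1 - m" by auto
    have "Pc l1 l2 a b m * wvec a b g k N (m + 1) n + Qc l1 l2 a b n * wvec a b g k N m (n + 1)
        = Pc l1 l2 a b m * Rcoef a b g (m + 1) k N + Qc l1 l2 a b (N - 1 - m) * Rcoef a b g m k N"
      unfolding wvec_def using True nn by simp
    also have "\<dots> = Dv a b m n * (c * Rcoef a b g m k (N - 1))"
      unfolding nn c_def by (rule F_rec[OF hab ha hbg hg kN mN])
    finally show ?thesis unfolding DF_pt[OF hl1 hl2] using True Dv_nz[OF hab, of m n] by simp
  next
    case False
    thus ?thesis unfolding DF_pt[OF hl1 hl2] wvec_def by auto
  qed
  show "DeltaF l1 l2 a b (wvec a b g k N) m n =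
    (if N = k then vzero else vscale (- (of_nat (N - k) * (of_nat N + of_nat k + g))) (wvec a b g k (N - 1))) m n"
    using lhs rhs unfolding c_def by simp
qed

lemma DeltaH_w: "DeltaH l1 l2 (wvec a b g k N) = vscale (l1 + l2 + 2 * of_nat N) (wvec a b g k N)"
proof (rule ext, rule ext)
  fix m n
  show "DeltaH l1 l2 (wvec a b g k N) m n = vscale (l1 + l2 + 2 * of_nat N) (wvec a b g k N) m n"
  proof (cases "m + n = N")
    case True
    hence "(of_nat N :: complex) = of_nat m + of_nat n" by (metis of_nat_add)
    thus ?thesis unfolding DH_pt vscale_def wvec_def using True by (simp add: algebra_simps)
  next
    case False thus ?thesis unfolding DH_pt vscale_def wvec_def by simp
  qed
qed

theorem mainTheorem4:
  fixes l1 l2 a b g :: complex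
  assumes hl1: "\<forall>j::nat. l1 \<noteq> - of_nat j"
    and hl2: "\<forall>j::nat. l2 \<noteq> - of_nat j"
    and hg: "g = l1 + l2 - 1"
    and hab: "a + b \<notin> \<int>"
    and ha: "\<forall>j::nat. a \<noteq> - of_nat (Suc j)"
    and hbg: "\<forall>j::nat. b + g \<noteq> - of_nat (Suc j)"
  shows "(\<forall>v. in_W v \<longrightarrow>
            commutator (DeltaH l1 l2) (DeltaE l1 l2 a b) v = vscale 2 (DeltaE l1 l2 a b v) \<and>
            commutator (DeltaH l1 l2) (DeltaF l1 l2 a b) v = vscale (-2) (DeltaF l1 l2 a b v) \<and>
            commutator (DeltaE l1 l2 a b) (DeltaF l1 l2 a b) v = DeltaH l1 l2 v)
       \<and> (\<forall>k N::nat. k \<le> N \<longrightarrow>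
            DeltaH l1 l2 (wvec a b g k N) = vscale (l1 + l2 + 2 * of_nat N) (wvec a b g k N) \<and>
            DeltaE l1 l2 a b (wvec a b g k N) = wvec a b g k (N + 1) \<and>
            DeltaF l1 l2 a b (wvec a b g k N) =
              (if N = k then vzero
               else vscale (- (of_nat (N - k) * (of_nat N + of_nat k + g))) (wvec a b g k (N - 1))))"
proof (intro conjI allI impI)
  fix v :: tvec
  show "commutator (DeltaH l1 l2) (DeltaE l1 l2 a b) v = vscale 2 (DeltaE l1 l2 a b v)"
    using comm_HE_pt[OF hab] by blast
  show "commutator (DeltaH l1 l2) (DeltaF l1 l2 a b) v = vscale (-2) (DeltaF l1 l2 a b v)"
    using comm_HF_pt[OF hab hl1 hl2] by blast
  show "commutator (DeltaE l1 l2 a b) (DeltaF l1 l2 a b) v = DeltaH l1 l2 v"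
    using comm_EF_pt[OF hab hl1 hl2] by blast
next
  fix k N :: nat assume kN: "k \<le> N"
  show "DeltaH l1 l2 (wvec a b g k N) = vscale (l1 + l2 + 2 * of_nat N) (wvec a b g k N)" by (rule DeltaH_w)
  show "DeltaE l1 l2 a b (wvec a b g k N) = wvec a b g k (N + 1)" by (rule DeltaE_w[OF hab kN])
  show "DeltaF l1 l2 a b (wvec a b g k N) =
              (if N = k then vzero
               else vscale (- (of_nat (N - k) * (of_nat N + of_nat k + g))) (wvec a b g k (N - 1)))"
    by (rule DeltaF_w[OF hab ha hbg hg hl1 hl2 kN])
qed

end
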